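(* Let $A_t$, $t\in I$ ($I$ an interval), be a solution of the ODE $\dot A_t=A_t[A_t,A_t^*]$ in $\mathfrak{gl}_n(\mathbb C)$. Then $t\mapsto\|A_t\|^2=\mathrm{tr}(A_tA_t^* )$ is monotonically non-increasing, and $\frac{d}{dt}\|A_t\|^2=0$ at a time $t$ if and only if $A_t$ is normal.
   Context: $A^*$ denotes the conjugate transpose (adjoint with respect to the standard Hermitian inner product on $\mathbb C^n$), $[X,Y]=XY-YX$, and $\|A\|^2=\mathrm{tr}(AA^* )$. *)

theory Defs
  imports "HOL-Analysis.Analysis"
begin

definition cadj :: "complex^'n^'n \<Rightarrow> complex^'n^'n" where
  "cadj A = (\<chi> i j. cnj (A $ j $ i))"

definition commut :: "complex^'n^'n \<Rightarrow> complex^'n^'n \<Rightarrow> complex^'n^'n" where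
  "commut X Y = X ** Y - Y ** X"

definition sqnorm :: "complex^'n^'n \<Rightarrow> real" where
  "sqnorm A = Re (trace (A ** cadj A))"

definition normal_matrix :: "complex^'n^'n \<Rightarrow> bool" where
  "normal_matrix A \<longleftrightarrow> A ** cadj A = cadj A ** A"

end

theory Submission
  imports Defs
begin

lemma mm_diff_r: "((X::complex^'n^'n) - Y) ** Z = X ** Z - Y ** Z"
  by (simp add: matrix_matrix_mult_def vec_eq_iff algebra_simps sum_subtractf)

lemma mm_diff_l: "(Z::complex^'n^'n) ** (X - Y) = Z ** X - Z ** Y"
  by (simp add: matrix_matrix_mult_def vec_eq_iff algebra_simps sum_subtractf)

lemma cadj_cadj[simp]: "cadj (cadj A) = A"
  by (simp add: cadj_def vec_eq_iff)

lemma cadj_mult: "cadj (X ** Y) = cadj Y ** cadj X"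
  by (simp add: cadj_def vec_eq_iff matrix_matrix_mult_def mult.commute)

lemma cadj_diff: "cadj (X - Y) = cadj X - cadj Y"
  by (simp add: cadj_def vec_eq_iff)

lemma trace_cadj: "trace (cadj X) = cnj (trace X)"
  by (simp add: cadj_def trace_def)

lemma inner_trace: "(X::complex^'n^'n) \<bullet> Y = Re (trace (X ** cadj Y))"
  by (simp add: inner_vec_def trace_def matrix_matrix_mult_def cadj_def inner_complex_def Re_sum)

lemma sqnorm_inner: "sqnorm A = A \<bullet> A"
  by (simp add: sqnorm_def inner_trace)

lemma sq_deriv:
  assumes "(A has_vector_derivative A') (at t within I)"
  shows "((\<lambda>s. A s \<bullet> A s) has_real_derivative 2 * (A t \<bullet> A')) (at t within I)"
proof -
  have d: "(A has_derivative (\<lambda>h. h *\<^sub>R A')) (at t within I)"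
    using assms by (simp add: has_vector_derivative_def)
  show ?thesis unfolding has_field_derivative_def
    apply (rule has_derivative_eq_rhs[OF has_derivative_inner[OF d d]])
    by (auto simp: fun_eq_iff inner_commute algebra_simps)
qed

lemma key:
  fixes A :: "complex^'n^'n"
  defines "N \<equiv> commut A (cadj A)"
  shows "2 * (A \<bullet> (A ** N)) = - (N \<bullet> N)"
proof -
  let ?C = "cadj A"
  let ?P = "A ** ?C" let ?Q = "?C ** A"
  have N: "N = ?P - ?Q" by (simp add: N_def commut_def)
  have NH: "cadj N = N" by (simp add: N cadj_diff cadj_mult)
  have "A \<bullet> (A ** N) = Re (trace (A ** (N ** ?C)))"
    by (simp add: inner_trace cadj_mult NH)
  also have "trace (A ** (N ** ?C)) = trace (N ** ?Q)"
    by (metis trace_mul_sym matrix_mul_assoc)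
  also have "trace (N ** ?Q) = trace (?P ** ?Q) - trace (?Q ** ?Q)"
    by (simp add: N mm_diff_r trace_sub)
  finally have 1: "A \<bullet> (A ** N) = Re (trace (?P ** ?Q) - trace (?Q ** ?Q))" .
  have PP: "trace (?P ** ?P) = trace (?Q ** ?Q)"
    by (metis trace_mul_sym matrix_mul_assoc)
  have QP: "trace (?Q ** ?P) = trace (?P ** ?Q)"
    by (metis trace_mul_sym)
  have "N \<bullet> N = Re (trace (N ** N))" by (simp add: inner_trace NH)
  also have "trace (N ** N) = trace (?P ** ?P) - trace (?P ** ?Q) - trace (?Q ** ?P) + trace (?Q ** ?Q)"
    by (simp add: N mm_diff_r mm_diff_l trace_sub trace_add)
  finally have 2: "N \<bullet> N = Re (2 * trace (?Q ** ?Q) - 2 * trace (?P ** ?Q))"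
    by (simp add: PP QP)
  show ?thesis using 1 2 by simp
qed


lemma sub_I:
  assumes "is_interval (I::real set)" "x \<in> I" "y \<in> I"
  shows "{x..y} \<subseteq> I"
  using mem_is_interval_1_I[OF assms(1,2,3)] by auto

theorem proposition4p4:
  fixes A :: "real \<Rightarrow> complex^'n^'n" and I :: "real set"
  assumes "is_interval I"
    and "\<exists>a\<in>I. \<exists>b\<in>I. a < b"
    and "\<And>t. t \<in> I \<Longrightarrow>
           (A has_vector_derivative (A t ** commut (A t) (cadj (A t)))) (at t within I)"
  shows "(\<forall>s\<in>I. \<forall>t\<in>I. s \<le> t \<longrightarrow> sqnorm (A t) \<le> sqnorm (A s))
       \<and> (\<forall>t\<in>I. (\<exists>D. ((\<lambda>s. sqnorm (A s)) has_real_derivative D) (at t within I))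
               \<and> (\<forall>D. ((\<lambda>s. sqnorm (A s)) has_real_derivative D) (at t within I)
                      \<longrightarrow> (D = 0 \<longleftrightarrow> normal_matrix (A t))))"
proof -
  define N where "N t = commut (A t) (cadj (A t))" for t
  have f: "sqnorm \<circ> A = (\<lambda>s. A s \<bullet> A s)" by (simp add: fun_eq_iff sqnorm_inner)
  have der: "((\<lambda>s. sqnorm (A s)) has_real_derivative - (N t \<bullet> N t)) (at t within I)"
    if "t \<in> I" for t
  proof -
    have "((\<lambda>s. A s \<bullet> A s) has_real_derivative 2 * (A t \<bullet> (A t ** N t))) (at t within I)"
      using sq_deriv[OF assms(3)[OF that]] by (simp add: N_def)
    then show ?thesis using key[of "A t"] by (simp add: N_def sqnorm_inner)
  qed
  have np: "- (N t \<bullet> N t) \<le> 0" for t by simp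
  have mono: "sqnorm (A t) \<le> sqnorm (A s)" if "s \<in> I" "t \<in> I" "s \<le> t" for s t
  proof (cases "s = t")
    case False
    then have st: "s < t" using that by simp
    have sub: "{s..t} \<subseteq> I" using sub_I[OF assms(1) that(1,2)] .
    have "\<exists>x\<in>{s<..<t}. sqnorm (A t) - sqnorm (A s) = (\<lambda>h. h * - (N x \<bullet> N x)) (t - s)"
      apply (rule mvt_simple[OF st, of "\<lambda>x. sqnorm (A x)"])
    proof -
      fix x assume "s \<le> x" "x \<le> t"
      then have "x \<in> I" using sub by auto
      then have "((\<lambda>s. sqnorm (A s)) has_real_derivative - (N x \<bullet> N x)) (at x within {s..t})"
        using der sub has_field_derivative_subset by blast
      then show "((\<lambda>s. sqnorm (A s)) has_derivative (\<lambda>h. h * - (N x \<bullet> N x))) (at x within {s..t})"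
        unfolding has_field_derivative_def by (rule has_derivative_eq_rhs) (auto simp: fun_eq_iff)
    qed
    then obtain x where "sqnorm (A t) - sqnorm (A s) = (t - s) * - (N x \<bullet> N x)" by auto
    moreover have "(t - s) * - (N x \<bullet> N x) \<le> 0"
      using st by (simp add: mult_nonneg_nonpos)
    ultimately show ?thesis by simp
  qed simp
  have limpt: "t islimpt I" if "t \<in> I" for t
  proof -
    obtain a b where ab: "a \<in> I" "b \<in> I" "a < b" using assms(2) by auto
    show ?thesis
    proof (cases "t < b")
      case True
      then have "t islimpt {t..b}" by simp
      then show ?thesis using sub_I[OF assms(1) that ab(2)] islimpt_subset by blast
    next
      case False
      then have "a < t" using ab by simp
      then have "t islimpt {a..t}" by simp
      then show ?thesis using sub_I[OF assms(1) ab(1) that] islimpt_subset by blast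
    qed
  qed
  have uniq: "D = - (N t \<bullet> N t)"
    if "t \<in> I" "((\<lambda>s. sqnorm (A s)) has_real_derivative D) (at t within I)" for t D
  proof -
    have nb: "at t within I \<noteq> bot" using limpt[OF that(1)] trivial_limit_within by blast
    show ?thesis
      using vector_derivative_unique_within[OF nb]
        that(2) der[OF that(1)] unfolding has_real_derivative_iff_has_vector_derivative
      by blast
  qed
  have nz: "(- (N t \<bullet> N t) = 0) = normal_matrix (A t)" for t
    by (simp add: N_def normal_matrix_def commut_def)
  show ?thesis
  proof (intro conjI ballI allI impI)
    fix s t assume "s \<in> I" "t \<in> I" "s \<le> t"
    then show "sqnorm (A t) \<le> sqnorm (A s)" by (rule mono)
  next
    fix t assume "t \<in> I"
    then show "\<exists>D. ((\<lambda>s. sqnorm (A s)) has_real_derivative D) (at t within I)"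
      using der by blast
  next
    fix t D assume "t \<in> I" "((\<lambda>s. sqnorm (A s)) has_real_derivative D) (at t within I)"
    then have "D = - (N t \<bullet> N t)" by (rule uniq)
    then show "(D = 0) = normal_matrix (A t)" using nz by simp
  qed
qed

end
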